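(* Let $L:\mathbb{R}^d\to\mathbb{R}^{\mathcal{Y}}_+$ be a polyhedral loss which indirectly elicits a finite property $\gamma:\Delta_{\mathcal{Y}}\rightrightarrows\mathcal{R}$. Then for any loss $\ell:\mathcal{R}\to\mathbb{R}^{\mathcal{Y}}_+$ eliciting $\gamma$, there exists a link $\psi:\mathbb{R}^d\to\mathcal{R}$ such that $(L,\psi)$ is calibrated with respect to $\ell$.
   Context: $\mathcal{Y}$ is a finite label set, $\Delta_{\mathcal{Y}}$ the probability simplex, $\mathbb{R}^{\mathcal{Y}}_+$ the nonnegative orthant. A property is a map $\Gamma:\Delta_{\mathcal{Y}}\rightrightarrows\mathcal{R}$ assigning to each $p$ a nonempty subset of $\mathcal{R}$; it is finite if $\mathcal{R}$ is finite; its level sets are $\Gamma_r=\{p:r\in\Gamma(p)\}$. A loss $L:\mathcal{R}\to\mathbb{R}^{\mathcal{Y}}_+$ elicits $\Gamma$ if $\Gamma(p)=\arg\min_{r\in\mathcal{R}}\langle p,L(r)\rangle$ for all $p$ (requiring the minimum to be attained); write $\mathrm{prop}[L]$ for this property. $L:\mathbb{R}^d\to\mathbb{R}^{\mathcal{Y}}_+$ is polyhedral if each coordinate is a pointwise maximum of finitely many affine functions (polyhedral losses elicit a property). A loss $L$ eliciting $\Gamma$ indirectly elicits $\gamma:\Delta_{\mathcal{Y}}\rightrightarrows\mathcal{R}$ if for every $u$ there is $r\in\mathcal{R}$ with $\Gamma_u\subseteq\gamma_r$. $(L,\psi)$ is calibrated with respect to $\ell$ if for all $p$, $\inf_{u:\psi(u)\notin\mathrm{prop}[\ell](p)}\langle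 p,L(u)\rangle>\inf_{u}\langle p,L(u)\rangle$ (infimum over the empty set is $+\infty$). *)

theory Defs
  imports "HOL-Analysis.Analysis" "HOL-Library.Extended_Real"
begin

definition prob_simplex :: "('y::finite \<Rightarrow> real) set" where
  "prob_simplex = {p. (\<forall>y. 0 \<le> p y) \<and> (\<Sum>y\<in>UNIV. p y) = 1}"

definition eloss :: "('y::finite \<Rightarrow> real) \<Rightarrow> ('y \<Rightarrow> real) \<Rightarrow> real" where
  "eloss p v = (\<Sum>y\<in>UNIV. p y * v y)"

definition nonneg_loss :: "('r \<Rightarrow> 'y \<Rightarrow> real) \<Rightarrow> bool" where
  "nonneg_loss L \<longleftrightarrow> (\<forall>r y. 0 \<le> L r y)"

definition prop_of :: "('r \<Rightarrow> 'y::finite \<Rightarrow> real) \<Rightarrow> ('y \<Rightarrow> real) \<Rightarrow> 'r set" where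
  "prop_of L p = {r. \<forall>r'. eloss p (L r) \<le> eloss p (L r')}"

definition elicits :: "('r \<Rightarrow> 'y::finite \<Rightarrow> real) \<Rightarrow> (('y \<Rightarrow> real) \<Rightarrow> 'r set) \<Rightarrow> bool" where
  "elicits L \<Gamma> \<longleftrightarrow> (\<forall>p\<in>prob_simplex. \<Gamma> p = prop_of L p \<and> prop_of L p \<noteq> {})"

definition level_set :: "(('y::finite \<Rightarrow> real) \<Rightarrow> 'r set) \<Rightarrow> 'r \<Rightarrow> ('y \<Rightarrow> real) set" where
  "level_set \<Gamma> r = {p\<in>prob_simplex. r \<in> \<Gamma> p}"

definition indirectly_elicits ::
  "('u \<Rightarrow> 'y::finite \<Rightarrow> real) \<Rightarrow> (('y \<Rightarrow> real) \<Rightarrow> 'r set) \<Rightarrow> bool" where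
  "indirectly_elicits L \<gamma> \<longleftrightarrow>
     elicits L (prop_of L) \<and> (\<forall>u. \<exists>r. level_set (prop_of L) u \<subseteq> level_set \<gamma> r)"

definition polyhedral_fun :: "(real^'d \<Rightarrow> real) \<Rightarrow> bool" where
  "polyhedral_fun f \<longleftrightarrow>
     (\<exists>A :: ((real^'d) \<times> real) set. finite A \<and> A \<noteq> {} \<and>
        (\<forall>u. f u = Max ((\<lambda>(a, b). a \<bullet> u + b) ` A)))"

definition polyhedral_loss :: "(real^'d \<Rightarrow> 'y \<Rightarrow> real) \<Rightarrow> bool" where
  "polyhedral_loss L \<longleftrightarrow> (\<forall>y. polyhedral_fun (\<lambda>u. L u y))"

(* (L, psi) calibrated w.r.t. ell; infimum over the empty set is +infinity (ereal) *)
definition calibrated ::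
  "('u \<Rightarrow> 'y::finite \<Rightarrow> real) \<Rightarrow> ('u \<Rightarrow> 'r) \<Rightarrow> ('r \<Rightarrow> 'y \<Rightarrow> real) \<Rightarrow> bool" where
  "calibrated L \<psi> ell \<longleftrightarrow>
     (\<forall>p\<in>prob_simplex.
        (INF u\<in>{u. \<psi> u \<notin> prop_of ell p}. ereal (eloss p (L u)))
          > (INF u. ereal (eloss p (L u))))"

end

theory Submission imports Defs begin
lemma finite_reps:
  fixes L :: "real^'d \<Rightarrow> 'y::finite \<Rightarrow> real"
  assumes poly: "polyhedral_loss L" and ne: "\<forall>p\<in>prob_simplex. prop_of L p \<noteq> {}"
  shows "\<exists>U0. finite U0 \<and> (\<forall>p\<in>prob_simplex. \<exists>u\<in>U0. u \<in> prop_of L p)"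
proof -
  have "\<forall>y. \<exists>A :: ((real^'d) \<times> real) set. finite A \<and> A \<noteq> {} \<and>
        (\<forall>u. L u y = Max ((\<lambda>(a, b). a \<bullet> u + b) ` A))"
    using poly unfolding polyhedral_loss_def polyhedral_fun_def by blast
  then obtain A :: "'y \<Rightarrow> ((real^'d) \<times> real) set" where
    Afin: "\<And>y. finite (A y)" and Ane: "\<And>y. A y \<noteq> {}" and
    LA: "\<And>u y. L u y = Max ((\<lambda>(a, b). a \<bullet> u + b) ` A y)"
    by metis
  define g :: "(real^'d) \<times> real \<Rightarrow> real^'d \<Rightarrow> real" where "g ab u = fst ab \<bullet> u + snd ab" for ab u
  have LA': "L u y = Max ((\<lambda>ab. g ab u) ` A y)" for u y
    unfolding LA g_def by (simp add: case_prod_beta')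
  define Sig where "Sig = {\<sigma>. \<forall>y. \<sigma> y \<in> A y}"
  have finSig: "finite Sig"
  proof -
    have "Sig = (\<Pi>\<^sub>E y \<in> UNIV. A y)" unfolding Sig_def by (auto simp: PiE_def Pi_def)
    then show ?thesis using Afin by (simp add: finite_PiE)
  qed
  define C where "C \<sigma> = {u. \<forall>y. \<forall>ab\<in>A y. g ab u \<le> g (\<sigma> y) u}" for \<sigma>
  have polyC: "polyhedron (C \<sigma>)" for \<sigma>
  proof -
    have "C \<sigma> = \<Inter> ((\<lambda>(y,ab). {u. (fst ab - fst (\<sigma> y)) \<bullet> u \<le> snd (\<sigma> y) - snd ab}) ` (SIGMA y:UNIV. A y))"
      unfolding C_def g_def by (auto simp: inner_diff_left algebra_simps)
    moreover have "finite (SIGMA y:UNIV. A y)" using Afin by (simp add: finite_SigmaI)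
    ultimately show ?thesis
      by (auto intro!: polyhedron_Inter polyhedron_halfspace_le)
  qed
  have LC: "L u y = g (\<sigma> y) u" if "\<sigma> \<in> Sig" "u \<in> C \<sigma>" for \<sigma> u y
    unfolding LA' using that Afin
    by (intro Max_eqI) (auto simp: Sig_def C_def)
  have inC: "\<exists>\<sigma>\<in>Sig. u \<in> C \<sigma>" for u
  proof -
    have "\<forall>y. \<exists>ab\<in>A y. g ab u = Max ((\<lambda>ab. g ab u) ` A y)"
      using Max_in[of "(\<lambda>ab. g ab u) ` A _"] Afin Ane by (metis (no_types, lifting) empty_is_image finite_imageI imageE)
    then obtain \<sigma> where \<sigma>: "\<And>y. \<sigma> y \<in> A y \<and> g (\<sigma> y) u = Max ((\<lambda>ab. g ab u) ` A y)" by metis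
    then have "\<sigma> \<in> Sig" "u \<in> C \<sigma>" unfolding Sig_def C_def using Afin by auto
    then show ?thesis by blast
  qed
  define pick :: "(real^'d) set \<Rightarrow> real^'d" where "pick F = (SOME x. x \<in> F)" for F
  define U0 where "U0 = (\<Union>\<sigma>\<in>Sig. pick ` {F. F face_of C \<sigma> \<and> F \<noteq> {}})"
  have "finite U0" unfolding U0_def using finSig
    by (intro finite_UN_I) (auto intro: finite_subset[OF _ finite_polyhedron_faces[OF polyC]])
  moreover have "\<exists>u\<in>U0. u \<in> prop_of L q" if q: "q \<in> prob_simplex" for q
  proof -
    obtain u0 where u0: "u0 \<in> prop_of L q" using ne q by blast
    obtain \<sigma> where \<sigma>: "\<sigma> \<in> Sig" "u0 \<in> C \<sigma>" using inC by blast
    define a where "a = (\<Sum>y\<in>UNIV. q y *\<^sub>R fst (\<sigma> y))"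
    define c where "c = (\<Sum>y\<in>UNIV. q y * snd (\<sigma> y))"
    have el: "eloss q (L u) = a \<bullet> u + c" if "u \<in> C \<sigma>" for u
      unfolding eloss_def LC[OF \<sigma>(1) that] a_def c_def g_def
      by (simp add: inner_sum_left distrib_left sum.distrib)
    have cvx: "convex (C \<sigma>)" using polyC polyhedron_imp_convex by blast
    have sup: "a \<bullet> x \<ge> a \<bullet> u0" if "x \<in> C \<sigma>" for x
    proof -
      have "eloss q (L u0) \<le> eloss q (L x)" using u0 unfolding prop_of_def by blast
      then show ?thesis using el[OF that] el[OF \<sigma>(2)] by linarith
    qed
    define F where "F = C \<sigma> \<inter> {x. a \<bullet> x = a \<bullet> u0}"
    have face: "F face_of C \<sigma>" unfolding F_def
      by (rule face_of_Int_supporting_hyperplane_ge[OF cvx sup])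
    have Fne: "F \<noteq> {}" using \<sigma>(2) unfolding F_def by auto
    have pF: "pick F \<in> F" unfolding pick_def using Fne by (simp add: some_in_eq)
    have "pick F \<in> U0" unfolding U0_def using \<sigma>(1) face Fne by blast
    moreover have "pick F \<in> prop_of L q"
    proof -
      have "eloss q (L (pick F)) = eloss q (L u0)" using pF el \<sigma>(2) unfolding F_def by auto
      then show ?thesis using u0 unfolding prop_of_def by simp
    qed
    ultimately show ?thesis by blast
  qed
  ultimately show ?thesis by blast
qed

definition tv :: "('y::finite \<Rightarrow> real) \<Rightarrow> real^'y" where "tv v = (\<chi> y. v y)"

lemma tvl: "tv p \<bullet> x = (\<Sum>y\<in>UNIV. p y * x$y)"
  by (simp add: tv_def inner_vec_def)

lemma tv_eloss: "tv p \<bullet> tv v = eloss p v"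
  unfolding tvl eloss_def by (simp add: tv_def)

lemma simplex_ne: "(\<lambda>y. 1 / real CARD('y::finite)) \<in> (prob_simplex :: ('y \<Rightarrow> real) set)"
  by (simp add: prob_simplex_def)

lemma dominate:
  fixes L :: "real^'d \<Rightarrow> 'y::finite \<Rightarrow> real"
  assumes fin: "finite U0" and rep: "\<forall>p\<in>prob_simplex. \<exists>u\<in>U0. u \<in> prop_of L p"
  shows "\<exists>u'\<in>U0. \<forall>p\<in>prob_simplex. \<forall>m. (\<forall>v. m \<le> eloss p (L v)) \<longrightarrow>
           (1 / real (card U0)) * (eloss p (L u') - m) \<le> eloss p (L u) - m"
proof -
  define W where "W = (\<lambda>u. tv (L u)) ` U0"
  have finW: "finite W" using fin W_def by simp
  have U0ne: "U0 \<noteq> {}" using rep simplex_ne by blast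
  then have Wne: "W \<noteq> {}" unfolding W_def by simp
  define N where "N = {x::real^'y. \<forall>i. 0 \<le> x$i}"
  have cN: "closed N" unfolding N_def by (rule closed_positive_orthant)
  have vN: "convex N" unfolding N_def convex_def by auto
  define K where "K = (\<Union>x\<in>convex hull W. \<Union>y\<in>N. {x + y})"
  have cK: "closed K" unfolding K_def
    by (rule compact_closed_sums[OF compact_convex_hull[OF finite_imp_compact[OF finW]] cN])
  have vK: "convex K" unfolding K_def by (rule convex_sums[OF convex_convex_hull vN])
  have inK: "tv (L u) \<in> K"
  proof (rule ccontr)
    assume nK: "tv (L u) \<notin> K"
    obtain a b where ab: "a \<bullet> tv (L u) < b" "\<And>x. x \<in> K \<Longrightarrow> b < a \<bullet> x"
      using separating_hyperplane_closed_point[OF vK cK nK] by blast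
    obtain w0 where w0: "w0 \<in> W" using Wne by blast
    have WK: "x + y \<in> K" if "x \<in> W" "y \<in> N" for x y
      unfolding K_def using that hull_subset[of W convex] by blast
    have w0K: "w0 + x \<in> K" if "x \<in> N" for x
      using WK[OF w0 that] .
    have N0: "0 \<in> N" unfolding N_def by simp
    have apos: "0 \<le> a$i" for i
    proof (rule ccontr)
      assume "\<not> 0 \<le> a$i"
      then have ai: "a$i < 0" by simp
      have bw: "b < a \<bullet> w0" using ab(2)[OF w0K[of 0]] by (simp add: N_def)
      define t where "t = (a \<bullet> w0 - b) / (- a$i)"
      have t0: "0 \<le> t" unfolding t_def using ai bw
        by (simp add: divide_pos_neg less_imp_le)
      define e :: "real^'y" where "e = (\<chi> j. if j = i then t else 0)"
      have eN: "e \<in> N" unfolding N_def e_def using t0 by simp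
      have ae: "a \<bullet> e = a$i * t" unfolding e_def inner_vec_def
        by (simp add: if_distrib cong: if_cong)
      have "a \<bullet> (w0 + e) = b" using ai unfolding inner_add_right ae t_def by (simp add: field_simps)
      then show False using ab(2)[OF w0K[OF eN]] by simp
    qed
    define s where "s = (\<Sum>i\<in>UNIV. a$i)"
    have spos: "s > 0"
    proof (rule ccontr)
      assume "\<not> s > 0"
      then have "s = 0" using apos unfolding s_def by (meson not_less sum_nonneg order.antisym)
      then have "\<forall>i. a$i = 0" using apos unfolding s_def by (simp add: sum_nonneg_eq_0_iff)
      then have "a = 0" by (simp add: vec_eq_iff)
      then show False using ab(1) ab(2)[OF w0K[of 0]] by (simp add: N_def)
    qed
    define q where "q y = a$y / s" for y
    have qS: "q \<in> prob_simplex" unfolding prob_simplex_def q_def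
      using apos spos by (simp add: sum_divide_distrib[symmetric] s_def)
    obtain u' where u': "u' \<in> U0" "u' \<in> prop_of L q" using rep qS by blast
    have le: "eloss q (L u') \<le> eloss q (L u)" using u'(2) unfolding prop_of_def by blast
    have aeq: "a \<bullet> tv v = s * eloss q v" for v
      unfolding eloss_def q_def inner_vec_def tv_def using spos
      by (simp add: sum_distrib_left)
    have "tv (L u') \<in> K" using WK[OF _ N0, of "tv (L u')"] u'(1) unfolding W_def by simp
    then have "b < s * eloss q (L u')" using ab(2) aeq by metis
    moreover have "s * eloss q (L u) < b" using ab(1) aeq by metis
    ultimately show False using le spos by (meson less_trans mult_left_mono not_less order.strict_implies_order)
  qed
  then obtain c n where cn: "c \<in> convex hull W" "n \<in> N" "tv (L u) = c + n"
    unfolding K_def by blast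
  obtain \<mu> where \<mu>: "\<forall>x\<in>W. 0 \<le> \<mu> x" "sum \<mu> W = 1" "(\<Sum>x\<in>W. \<mu> x *\<^sub>R x) = c"
    using cn(1) unfolding convex_hull_finite[OF finW] by blast
  have "\<exists>w\<in>W. \<mu> w \<ge> 1 / real (card W)"
  proof (rule ccontr)
    assume "\<not> ?thesis"
    then have "\<forall>w\<in>W. \<mu> w < 1 / real (card W)" by auto
    then have "sum \<mu> W < (\<Sum>w\<in>W. 1 / real (card W))"
      using finW Wne by (intro sum_strict_mono) auto
    also have "\<dots> = 1" using finW Wne by simp
    finally show False using \<mu>(2) by simp
  qed
  then obtain w where w: "w \<in> W" "\<mu> w \<ge> 1 / real (card W)" by blast
  then obtain u' where u': "u' \<in> U0" "w = tv (L u')" unfolding W_def by blast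
  have cardW: "0 < card W" "card W \<le> card U0"
    using finW Wne fin by (auto simp: W_def card_gt_0_iff card_image_le)
  have th: "1 / real (card U0) \<le> \<mu> w"
    using w(2) cardW by (meson frac_le less_eq_real_def of_nat_0_less_iff of_nat_le_iff order.trans zero_le_one)
  show ?thesis
  proof (intro bexI[OF _ u'(1)] ballI allI impI)
    fix p m assume pS: "p \<in> prob_simplex" and m: "\<forall>v. m \<le> eloss p (L v)"
    have p0: "\<forall>y. 0 \<le> p y" using pS unfolding prob_simplex_def by blast
    have Wm: "m \<le> tv p \<bullet> x" if "x \<in> W" for x
      using that m unfolding W_def by (auto simp: tv_eloss)
    have n0: "0 \<le> tv p \<bullet> n" unfolding tvl using p0 cn(2) unfolding N_def
      by (simp add: sum_nonneg)
    have "eloss p (L u) = tv p \<bullet> c + tv p \<bullet> n"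
      by (simp add: tv_eloss[symmetric] cn(3) inner_add_right)
    also have "tv p \<bullet> c = (\<Sum>x\<in>W. \<mu> x * (tv p \<bullet> x))"
      unfolding \<mu>(3)[symmetric] by (simp add: inner_sum_right)
    finally have e1: "eloss p (L u) - m \<ge> (\<Sum>x\<in>W. \<mu> x * (tv p \<bullet> x)) - m" using n0 by linarith
    have "(\<Sum>x\<in>W. \<mu> x * (tv p \<bullet> x)) - m = (\<Sum>x\<in>W. \<mu> x * (tv p \<bullet> x - m))"
      using \<mu>(2) by (simp add: right_diff_distrib sum_subtractf sum_distrib_right[symmetric])
    also have "\<dots> \<ge> \<mu> w * (tv p \<bullet> w - m)"
      using finW w(1) \<mu>(1) Wm
      by (intro member_le_sum) (auto intro!: mult_nonneg_nonneg)
    finally have e2: "eloss p (L u) - m \<ge> \<mu> w * (tv p \<bullet> w - m)" using e1 by linarith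
    have "(1 / real (card U0)) * (tv p \<bullet> w - m) \<le> \<mu> w * (tv p \<bullet> w - m)"
      using th Wm[OF w(1)] by (intro mult_right_mono) auto
    then show "(1 / real (card U0)) * (eloss p (L u') - m) \<le> eloss p (L u) - m"
      using e2 u'(2) by (simp add: tv_eloss)
  qed
qed

theorem theorem8:
  fixes L :: "real^'d \<Rightarrow> 'y::finite \<Rightarrow> real"
    and \<gamma> :: "('y \<Rightarrow> real) \<Rightarrow> 'r::finite set"
    and ell :: "'r \<Rightarrow> 'y \<Rightarrow> real"
  assumes "nonneg_loss L"
    and "polyhedral_loss L"
    and "indirectly_elicits L \<gamma>"
    and "nonneg_loss ell"
    and "elicits ell \<gamma>"
  shows "\<exists>\<psi> :: real^'d \<Rightarrow> 'r. calibrated L \<psi> ell"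
proof -
  have eL: "elicits L (prop_of L)" and lev: "\<forall>u. \<exists>r. level_set (prop_of L) u \<subseteq> level_set \<gamma> r"
    using assms(3) unfolding indirectly_elicits_def by auto
  have ne: "\<forall>p\<in>prob_simplex. prop_of L p \<noteq> {}" using eL unfolding elicits_def by blast
  have gam: "\<gamma> p = prop_of ell p" if "p \<in> prob_simplex" for p
    using assms(5) that unfolding elicits_def by blast
  obtain U0 where U0: "finite U0" "\<forall>p\<in>prob_simplex. \<exists>u\<in>U0. u \<in> prop_of L p"
    using finite_reps[OF assms(2) ne] by blast
  have U0ne: "U0 \<noteq> {}" using U0(2) simplex_ne by blast
  define \<theta> where "\<theta> = 1 / real (card U0)"
  have th0: "\<theta> > 0" unfolding \<theta>_def using U0(1) U0ne by (simp add: card_gt_0_iff)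
  define H where "H u u' \<longleftrightarrow> (\<forall>p\<in>prob_simplex. \<forall>m. (\<forall>v. m \<le> eloss p (L v)) \<longrightarrow>
           \<theta> * (eloss p (L u') - m) \<le> eloss p (L u) - m)" for u u'
  have dom0: "\<exists>u'\<in>U0. H u u'" for u
    unfolding H_def \<theta>_def by (rule dominate[OF U0])
  have dom: "\<exists>u'. u' \<in> U0 \<and> H u u'" for u
    using dom0[of u] by (simp only: Bex_def)
  define rof where "rof u' = (SOME r. level_set (prop_of L) u' \<subseteq> level_set \<gamma> r)" for u'
  have rof: "level_set (prop_of L) u' \<subseteq> level_set \<gamma> (rof u')" for u'
    unfolding rof_def using someI_ex[OF lev[rule_format, of u']] .
  define sel where "sel u = (SOME u'. u' \<in> U0 \<and> H u u')" for u
  have sel: "sel u \<in> U0" "H u (sel u)" for u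
    unfolding sel_def using someI_ex[OF dom[of u]] by auto
  define \<psi> where "\<psi> u = rof (sel u)" for u
  have "calibrated L \<psi> ell"
    unfolding calibrated_def
  proof
    fix p :: "'y \<Rightarrow> real" assume pS: "p \<in> prob_simplex"
    obtain u0 where u0: "u0 \<in> prop_of L p" using ne pS by blast
    define m where "m = eloss p (L u0)"
    have mmin: "\<forall>v. m \<le> eloss p (L v)" using u0 unfolding m_def prop_of_def by blast
    define D where "D = {x. \<exists>u'\<in>U0. x = eloss p (L u') - m \<and> x > 0}"
    have finD: "finite D"
    proof -
      have "D \<subseteq> (\<lambda>u'. eloss p (L u') - m) ` U0" unfolding D_def by blast
      then show ?thesis using U0(1) finite_subset by blast
    qed
    define \<delta> where "\<delta> = \<theta> * (if D = {} then 1 else Min D)"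
    have d0: "\<delta> > 0"
    proof (cases "D = {}")
      case False
      then have "Min D \<in> D" using finD by simp
      then have "Min D > 0" unfolding D_def by blast
      then show ?thesis unfolding \<delta>_def using th0 False by simp
    qed (simp add: \<delta>_def th0)
    have key: "m + \<delta> \<le> eloss p (L u)" if bad: "\<psi> u \<notin> prop_of ell p" for u
    proof (rule ccontr)
      assume "\<not> m + \<delta> \<le> eloss p (L u)"
      then have lt: "eloss p (L u) - m < \<delta>" by simp
      define u' where "u' = sel u"
      have hu: "\<theta> * (eloss p (L u') - m) \<le> eloss p (L u) - m"
        using sel(2)[of u] pS mmin unfolding H_def u'_def by blast
      have "eloss p (L u') - m \<le> 0"
      proof (rule ccontr)
        assume "\<not> eloss p (L u') - m \<le> 0"
        then have inD: "eloss p (L u') - m \<in> D" unfolding D_def u'_def using sel(1) by auto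
        then have "D \<noteq> {}" by blast
        then have "\<delta> = \<theta> * Min D" unfolding \<delta>_def by simp
        also have "\<dots> \<le> \<theta> * (eloss p (L u') - m)" using Min_le[OF finD inD] th0 by simp
        finally show False using hu lt by simp
      qed
      then have "eloss p (L u') \<le> m" by simp
      then have "\<forall>r'. eloss p (L u') \<le> eloss p (L r')" using mmin by (meson order_trans)
      then have "u' \<in> prop_of L p" unfolding prop_of_def by simp
      then have "p \<in> level_set (prop_of L) u'" unfolding level_set_def using pS by simp
      then have "p \<in> level_set \<gamma> (rof u')" using rof by blast
      then have "rof u' \<in> prop_of ell p" unfolding level_set_def using gam[OF pS] by simp
      then show False using bad unfolding \<psi>_def u'_def by simp
    qed
    have "(INF u. ereal (eloss p (L u))) \<le> ereal m"
      unfolding m_def by (rule INF_lower2[of u0]) auto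
    also have "\<dots> < ereal (m + \<delta>)" using d0 by simp
    also have "\<dots> \<le> (INF u\<in>{u. \<psi> u \<notin> prop_of ell p}. ereal (eloss p (L u)))"
      by (rule INF_greatest) (use key in auto)
    finally show "(INF u. ereal (eloss p (L u))) < (INF u\<in>{u. \<psi> u \<notin> prop_of ell p}. ereal (eloss p (L u)))" .
  qed
  then show ?thesis by blast
qed

end
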